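(* Let $m \geq 0$, $n \geq 1$ be integers and let $c = (c^t; c^b)$ be a sorted deterministically recurrent configuration on $K_{m,n}^0$. Let $k_j := |\{ i \in \{1,\ldots,m\} : c^t_i < j\}|$ for $j \in \{1,\ldots,n\}$, and let $(F_1, F_2) := (F(k), F(c^b))$. Then $\mathrm{Diff}(F_1, F_2) = \Phi(c)$; that is, $\Phi = \mathrm{Diff} \circ \Psi$ on sorted deterministically recurrent configurations, where $\Psi(c) := (F(k), F(c^b))$.
   Context: $K_{m,n}^0$ is the complete bipartite graph with "top" vertices $v^t_0, \ldots, v^t_m$ and "bottom" vertices $v^b_1, \ldots, v^b_n$, with an edge between every top and every bottom vertex; $v^t_0$ is the sink. A configuration is a vector $c = (c^t_1, \ldots, c^t_m; c^b_1, \ldots, c^b_n)$ of non-negative integers; it is sorted if $c^t$, $c^b$ are weakly increasing, stable if $c^t_i < n$ and $c^b_j < m+1$ for all $i,j$. Abelian sandpile model (ASM): an unstable non-sink vertex topples by sending one grain to each neighbour (bottom vertices also to the sink); grains sent to the sink disappear. In the Markov chain on stable configurations which adds a grain to a uniformly random non-sink vertex and stabilises by the ASM, a stable configuration is deterministically recurrent if it is a recurrent state. Ferrers diagrams: for a weakly increasing sequence $s=(s_1,\ldots,s_r)$ of non-negative integers, $F(s)$ is the left-aligned diagram with $s_i$ unit cells in row $i$, rows numbered from bottom to top; we place it with its bottom-left corner at the origin, so row $i$ occupies cells $[x-1,x]\times[i-1,i]$ for $1 \le x \le s_i$. For $F_1 = F(s)$ and $F_2 = F(s')$ with $s, s'$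 of length $n$ and $s_n = s'_n = m$: let $F_1' := F(0, s_1, \ldots, s_{n-1}, s_n + 1)$ (add an empty row at the bottom and one cell to the top row) and $F_2' := F(s'_1 + 1, \ldots, s'_n + 1, m+1)$ (add one cell to each row and a full row of $m+1$ cells at the top). $\mathrm{Diff}(F_1,F_2) := F_2' \setminus F_1'$ is the set of unit cells of $F_2'$ not in $F_1'$. A parallelogram polyomino in the box $[0,m+1]\times[0,n]$ is the set of unit cells lying between two lattice paths $\mathcal{U}$ (upper) and $\mathcal{L}$ (lower) from $(0,0)$ to $(m+1,n)$ with steps $N=(0,1)$, $E=(1,0)$, which meet only at their endpoints. The Dukes–Le Borgne map $\Phi$: for a sorted stable $c$, $\mathcal{U}(c^t)$ is the path from $(0,0)$ to $(m+1,n)$ whose $E$ steps occur at heights $1+c^t_1, \ldots, 1+c^t_m, n$ (in this order), and $\mathcal{L}(c^b)$ is the path from $(0,0)$ to $(m+1,n)$ whose $N$ steps occur at $x$-coordinates $1+c^b_1, \ldots, 1+c^b_n$; $\Phi(c)$ is the set of unit cells between $\mathcal{U}(c^t)$ and $\mathcal{L}(c^b)$. It is known that $\Phi$ is a bijection from sorted deterministically recurrent configurations on $K_{m,n}^0$ to parallelogram polyominoes with bounding box $[0,m+1]\times[0,n]$. *)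

theory Defs
  imports Main
begin

text \<open>Vertices: Top i (i = 0..m, Top 0 is the sink) and Bot j (j = 1..n).
  Other constructor values are not vertices of the graph.\<close>
datatype vert = Top nat | Bot nat

definition nonsink :: "nat \<Rightarrow> nat \<Rightarrow> vert set" where
  "nonsink m n = {Top i | i. 1 \<le> i \<and> i \<le> m} \<union> {Bot j | j. 1 \<le> j \<and> j \<le> n}"

text \<open>Degree of a non-sink vertex: top vertices have n neighbours,
  bottom vertices have m+1 neighbours (including the sink).\<close>
fun deg :: "nat \<Rightarrow> nat \<Rightarrow> vert \<Rightarrow> nat" where
  "deg m n (Top i) = n"
| "deg m n (Bot j) = m + 1"

fun adj :: "vert \<Rightarrow> vert \<Rightarrow> bool" where
  "adj (Top i) (Bot j) = True"
| "adj (Bot j) (Top i) = True"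
| "adj _ _ = False"

definition is_config :: "nat \<Rightarrow> nat \<Rightarrow> (vert \<Rightarrow> nat) \<Rightarrow> bool" where
  "is_config m n c \<longleftrightarrow> (\<forall>v. v \<notin> nonsink m n \<longrightarrow> c v = 0)"

definition stable :: "nat \<Rightarrow> nat \<Rightarrow> (vert \<Rightarrow> nat) \<Rightarrow> bool" where
  "stable m n c \<longleftrightarrow> (\<forall>v\<in>nonsink m n. c v < deg m n v)"

text \<open>Toppling of vertex v: v loses deg v grains, every non-sink neighbour gains one
  (grains sent to the sink disappear).\<close>
definition topple :: "nat \<Rightarrow> nat \<Rightarrow> vert \<Rightarrow> (vert \<Rightarrow> nat) \<Rightarrow> (vert \<Rightarrow> nat)" where
  "topple m n v c = (\<lambda>w. if w = v then c w - deg m n v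
                         else if w \<in> nonsink m n \<and> adj v w then c w + 1 else c w)"

definition topple_step :: "nat \<Rightarrow> nat \<Rightarrow> (vert \<Rightarrow> nat) \<Rightarrow> (vert \<Rightarrow> nat) \<Rightarrow> bool" where
  "topple_step m n c c' \<longleftrightarrow> (\<exists>v\<in>nonsink m n. deg m n v \<le> c v \<and> c' = topple m n v c)"

definition stabilises_to :: "nat \<Rightarrow> nat \<Rightarrow> (vert \<Rightarrow> nat) \<Rightarrow> (vert \<Rightarrow> nat) \<Rightarrow> bool" where
  "stabilises_to m n c c' \<longleftrightarrow> (topple_step m n)\<^sup>*\<^sup>* c c' \<and> stable m n c'"

text \<open>Transitions of the Markov chain with positive probability: add a grain at
  some non-sink vertex and stabilise.\<close>
definition markov_step :: "nat \<Rightarrow> nat \<Rightarrow> (vert \<Rightarrow> nat) \<Rightarrow> (vert \<Rightarrow> nat) \<Rightarrow> bool" where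
  "markov_step m n c c' \<longleftrightarrow>
     (\<exists>v\<in>nonsink m n. stabilises_to m n (c(v := c v + 1)) c')"

text \<open>Recurrent state of the (finite) Markov chain on stable configurations:
  every state reachable from c can reach c back.\<close>
definition det_recurrent :: "nat \<Rightarrow> nat \<Rightarrow> (vert \<Rightarrow> nat) \<Rightarrow> bool" where
  "det_recurrent m n c \<longleftrightarrow> is_config m n c \<and> stable m n c \<and>
     (\<forall>c'. (markov_step m n)\<^sup>*\<^sup>* c c' \<longrightarrow> (markov_step m n)\<^sup>*\<^sup>* c' c)"

definition sorted_config :: "nat \<Rightarrow> nat \<Rightarrow> (vert \<Rightarrow> nat) \<Rightarrow> bool" where
  "sorted_config m n c \<longleftrightarrow>
     (\<forall>i i'. 1 \<le> i \<and> i \<le> i' \<and> i' \<le> m \<longrightarrow> c (Top i) \<le> c (Top i')) \<and>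
     (\<forall>j j'. 1 \<le> j \<and> j \<le> j' \<and> j' \<le> n \<longrightarrow> c (Bot j) \<le> c (Bot j'))"

text \<open>A unit cell [a,a+1] x [b,b+1] is represented by its lower-left corner (a,b).
  For s = (s_1,...,s_r) (list, 0-indexed), row i (b = i-1) holds the cells with a < s_i.\<close>
definition ferrers :: "nat list \<Rightarrow> (nat \<times> nat) set" where
  "ferrers s = {(a, b). b < length s \<and> a < s ! b}"

text \<open>F_1' = F(0, s_1, ..., s_{n-1}, s_n + 1),  F_2' = F(s'_1+1, ..., s'_n+1, m+1),
  Diff = F_2' minus F_1'.\<close>
definition Diff :: "nat \<Rightarrow> nat list \<Rightarrow> nat list \<Rightarrow> (nat \<times> nat) set" where
  "Diff m s s' = ferrers (map Suc s' @ [m + 1]) - ferrers (0 # butlast s @ [last s + 1])"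

definition k_seq :: "nat \<Rightarrow> nat \<Rightarrow> (vert \<Rightarrow> nat) \<Rightarrow> nat list" where
  "k_seq m n c = map (\<lambda>j. card {i \<in> {1..m}. c (Top i) < j}) [1..<n+1]"

definition bot_seq :: "nat \<Rightarrow> (vert \<Rightarrow> nat) \<Rightarrow> nat list" where
  "bot_seq n c = map (\<lambda>j. c (Bot j)) [1..<n+1]"

text \<open>Height of the E step of the upper path U(c^t) in column a (between x = a and
  x = a+1), a = 0..m: the E steps occur at heights 1+c^t_1, ..., 1+c^t_m, n.\<close>
definition upper_height :: "nat \<Rightarrow> nat \<Rightarrow> (vert \<Rightarrow> nat) \<Rightarrow> nat \<Rightarrow> nat" where
  "upper_height m n c a = (if a < m then 1 + c (Top (a + 1)) else n)"

text \<open>Height of the E step of the lower path L(c^b) in column a: the number of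
  N steps at x-coordinates \<le> a, the N steps being at x = 1+c^b_1, ..., 1+c^b_n.\<close>
definition lower_height :: "nat \<Rightarrow> (vert \<Rightarrow> nat) \<Rightarrow> nat \<Rightarrow> nat" where
  "lower_height n c a = card {j \<in> {1..n}. 1 + c (Bot j) \<le> a}"

text \<open>Phi(c): the unit cells lying between U(c^t) and L(c^b) in the box [0,m+1] x [0,n].\<close>
definition Phi :: "nat \<Rightarrow> nat \<Rightarrow> (vert \<Rightarrow> nat) \<Rightarrow> (nat \<times> nat) set" where
  "Phi m n c = {(a, b). a \<le> m \<and> lower_height n c a \<le> b \<and> b < upper_height m n c a}"

end

theory Submission
  imports Defs
begin

lemma L1_nth:
  assumes "length k = n" "1 \<le> n" "b \<le> n"
  shows "(0 # butlast k @ [last k + 1]) ! b =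
    (if b = 0 then 0 else if b < n then k ! (b - 1) else last k + 1)"
proof (cases b)
  case 0 then show ?thesis by simp
next
  case (Suc b')
  have lb: "length (butlast k) = n - 1" using assms by simp
  show ?thesis
  proof (cases "b' < n - 1")
    case True
    then have "b < n" using Suc by simp
    then show ?thesis using True Suc lb assms by (simp add: nth_append nth_butlast)
  next
    case False
    then have "b' = n - 1" using Suc assms by simp
    then show ?thesis using Suc lb assms by (simp add: nth_append)
  qed
qed

lemma card_le_bound:
  assumes "S \<subseteq> {1..a}" shows "card S \<le> a"
  using card_mono[OF _ assms] by simp

lemma card_ge_bound:
  assumes "{1..a} \<subseteq> S" "finite S" shows "a \<le> card S"
  using card_mono[OF assms(2) assms(1)] by simp

theorem theorem4p9:
  fixes m n :: nat and c :: "vert \<Rightarrow> nat"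
  assumes "1 \<le> n"
    and "sorted_config m n c"
    and "det_recurrent m n c"
  shows "Diff m (k_seq m n c) (bot_seq n c) = Phi m n c"
proof -
  have st: "stable m n c" using assms(3) unfolding det_recurrent_def by simp
  have stT: "c (Top i) < n" if "1 \<le> i" "i \<le> m" for i
  proof -
    have "Top i \<in> nonsink m n" using that unfolding nonsink_def by auto
    then show ?thesis using st unfolding stable_def by fastforce
  qed
  have stB: "c (Bot j) < m + 1" if "1 \<le> j" "j \<le> n" for j
  proof -
    have "Bot j \<in> nonsink m n" using that unfolding nonsink_def by auto
    then show ?thesis using st unfolding stable_def by fastforce
  qed
  have sT: "c (Top i) \<le> c (Top i')" if "1 \<le> i" "i \<le> i'" "i' \<le> m" for i i'
    using assms(2) that unfolding sorted_config_def by blast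
  have sB: "c (Bot j) \<le> c (Bot j')" if "1 \<le> j" "j \<le> j'" "j' \<le> n" for j j'
    using assms(2) that unfolding sorted_config_def by blast
  define kk where "kk b = card {i \<in> {1..m}. c (Top i) < b}" for b
  have klen: "length (k_seq m n c) = n" by (simp add: k_seq_def)
  have knth: "k_seq m n c ! j = kk (Suc j)" if "j < n" for j
    using that by (simp add: k_seq_def kk_def del: upt_Suc)
  have klast: "last (k_seq m n c) = m"
  proof -
    have "last (k_seq m n c) = k_seq m n c ! (n - 1)"
    proof -
      have "k_seq m n c \<noteq> []" using klen assms(1) by auto
      then show ?thesis using klen by (simp add: last_conv_nth)
    qed
    also have "\<dots> = kk n" using knth[of "n-1"] assms(1) by simp
    also have "\<dots> = m"
    proof -
      have "{i \<in> {1..m}. c (Top i) < n} = {1..m}" using stT by auto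
      then show ?thesis by (simp add: kk_def)
    qed
    finally show ?thesis .
  qed
  have bnth: "bot_seq n c ! j = c (Bot (Suc j))" if "j < n" for j
    using that by (simp add: bot_seq_def del: upt_Suc)
  have blen: "length (bot_seq n c) = n" by (simp add: bot_seq_def del: upt_Suc)
  have kkey: "kk b \<le> a \<longleftrightarrow> (a < m \<longrightarrow> b \<le> c (Top (a + 1)))" for a b
  proof (cases "a < m")
    case True
    show ?thesis
    proof
      assume h: "kk b \<le> a"
      show "a < m \<longrightarrow> b \<le> c (Top (a + 1))"
      proof (rule ccontr)
        assume "\<not> ?thesis"
        then have lt: "c (Top (a+1)) < b" by simp
        have "{1..a+1} \<subseteq> {i \<in> {1..m}. c (Top i) < b}"
        proof
          fix i assume "i \<in> {1..a+1}"
          then show "i \<in> {i \<in> {1..m}. c (Top i) < b}"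
            using sT[of i "a+1"] True lt by auto
        qed
        then have "a + 1 \<le> kk b" unfolding kk_def by (intro card_ge_bound) auto
        then show False using h by simp
      qed
    next
      assume h: "a < m \<longrightarrow> b \<le> c (Top (a + 1))"
      have "{i \<in> {1..m}. c (Top i) < b} \<subseteq> {1..a}"
      proof
        fix i assume i: "i \<in> {i \<in> {1..m}. c (Top i) < b}"
        show "i \<in> {1..a}"
        proof (rule ccontr)
          assume "i \<notin> {1..a}"
          then have "a + 1 \<le> i" using i by auto
          then have "c (Top (a+1)) \<le> c (Top i)" using sT[of "a+1" i] i by auto
          then show False using h True i by auto
        qed
      qed
      then show "kk b \<le> a" unfolding kk_def by (rule card_le_bound)
    qed
  next
    case False
    have "kk b \<le> m" unfolding kk_def by (rule card_le_bound) auto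
    then show ?thesis using False by simp
  qed
  have lkey: "lower_height n c a \<le> b \<longleftrightarrow> a \<le> c (Bot (b + 1))" if "b < n" for a b
  proof
    assume h: "lower_height n c a \<le> b"
    show "a \<le> c (Bot (b + 1))"
    proof (rule ccontr)
      assume "\<not> ?thesis"
      then have lt: "c (Bot (b+1)) < a" by simp
      have "{1..b+1} \<subseteq> {j \<in> {1..n}. 1 + c (Bot j) \<le> a}"
      proof
        fix j assume "j \<in> {1..b+1}"
        then show "j \<in> {j \<in> {1..n}. 1 + c (Bot j) \<le> a}"
          using sB[of j "b+1"] that lt by auto
      qed
      then have "b + 1 \<le> lower_height n c a" unfolding lower_height_def
        by (intro card_ge_bound) auto
      then show False using h by simp
    qed
  next
    assume h: "a \<le> c (Bot (b + 1))"
    have "{j \<in> {1..n}. 1 + c (Bot j) \<le> a} \<subseteq> {1..b}"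
    proof
      fix j assume j: "j \<in> {j \<in> {1..n}. 1 + c (Bot j) \<le> a}"
      show "j \<in> {1..b}"
      proof (rule ccontr)
        assume "j \<notin> {1..b}"
        then have "b + 1 \<le> j" using j by auto
        then have "c (Bot (b+1)) \<le> c (Bot j)" using sB[of "b+1" j] j by auto
        then show False using h j by auto
      qed
    qed
    then show "lower_height n c a \<le> b" unfolding lower_height_def by (rule card_le_bound)
  qed
  have ub: "upper_height m n c a \<le> n" for a
    using stT[of "a+1"] unfolding upper_height_def by auto
  have ukey: "b < upper_height m n c a \<longleftrightarrow> (if a < m then b \<le> c (Top (a+1)) else b < n)" for a b
    unfolding upper_height_def by auto
  show ?thesis
  proof (rule set_eqI, clarify)
    fix a b
    have D: "(a, b) \<in> Diff m (k_seq m n c) (bot_seq n c) \<longleftrightarrow>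
      b < n \<and> a \<le> c (Bot (b+1)) \<and> (b = 0 \<or> kk b \<le> a)"
    proof (cases "b \<le> n")
      case True
      have e1: "(map Suc (bot_seq n c) @ [m + 1]) ! b = (if b < n then Suc (c (Bot (b+1))) else m + 1)"
        using True blen bnth by (auto simp: nth_append)
      have e2: "(0 # butlast (k_seq m n c) @ [last (k_seq m n c) + 1]) ! b =
          (if b = 0 then 0 else if b < n then kk b else m + 1)"
        using L1_nth[OF klen assms(1) True] knth[of "b-1"] klast by auto
      have l1: "length (0 # butlast (k_seq m n c) @ [last (k_seq m n c) + 1]) = n + 1"
        using klen assms(1) by simp
      show ?thesis
        unfolding Diff_def ferrers_def using e1 e2 l1 True blen by auto
    next
      case False
      then show ?thesis unfolding Diff_def ferrers_def using blen by auto
    qed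
    have P: "(a, b) \<in> Phi m n c \<longleftrightarrow>
      b < n \<and> a \<le> c (Bot (b+1)) \<and> (a < m \<longrightarrow> b \<le> c (Top (a + 1)))"
    proof
      assume h: "(a, b) \<in> Phi m n c"
      then have bn: "b < n" using ub[of a] unfolding Phi_def by auto
      then show "b < n \<and> a \<le> c (Bot (b+1)) \<and> (a < m \<longrightarrow> b \<le> c (Top (a + 1)))"
        using h lkey[OF bn] ukey[of b a] unfolding Phi_def by auto
    next
      assume h: "b < n \<and> a \<le> c (Bot (b+1)) \<and> (a < m \<longrightarrow> b \<le> c (Top (a + 1)))"
      have "a \<le> m" using h stB[of "b+1"] by auto
      then show "(a, b) \<in> Phi m n c"
        using h lkey[of b a] ukey[of b a] unfolding Phi_def by auto
    qed
    have kk0: "kk 0 = 0" by (simp add: kk_def)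
    show "((a, b) \<in> Diff m (k_seq m n c) (bot_seq n c)) = ((a, b) \<in> Phi m n c)"
      unfolding D P using kkey[of b a] kk0 by auto
  qed
qed

end
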